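(* Let $A\in\mathbb{R}^{n\times n}$, $B\in\mathbb{R}^{n\times m}$ with $m\ge1$ and $(A,B)$ uncontrollable, and let $r_c=r_c(A,B)$ be its zero-norm distance to controllability. Then (1) $r_c\le n-\operatorname{rank}B$ if $\operatorname{rank}B\ge 1$, and $r_c\le n$ if $\operatorname{rank}B=0$; (2) $r_c\ge \min\{|J|: J\subseteq\{1,\dots,n\},\ (A,[B,\ I_n(:,J)])\text{ is controllable}\}$.
   Context: $r_c(A,B)=\min\{\|[\Delta A,\Delta B]\|_0: \Delta A\in\mathbb{R}^{n\times n},\Delta B\in\mathbb{R}^{n\times m},(A+\Delta A,B+\Delta B)\text{ controllable}\}$, where $\|M\|_0$ is the number of nonzero entries of $M$. $I_n(:,J)$ is the submatrix of the $n\times n$ identity matrix consisting of the columns indexed by $J$. Controllability of $(A,B)$ means $\operatorname{rank}[B,AB,\dots,A^{n-1}B]=n$. *)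

theory Defs
  imports "Jordan_Normal_Form.DL_Rank"
begin

text \<open>Matrices are Jordan_Normal_Form matrices of type real mat with explicit dimensions.
Indices are 0-based: the index set {1,...,n} of the paper is rendered as {0..<n}.\<close>

definition mrank :: "nat \<Rightarrow> real mat \<Rightarrow> nat" where
  "mrank n M = vec_space.rank n M"

definition hcat :: "real mat \<Rightarrow> real mat \<Rightarrow> real mat" where
  "hcat M N = mat_of_cols (dim_row M) (cols M @ cols N)"

definition ctrb_mat :: "real mat \<Rightarrow> real mat \<Rightarrow> real mat" where
  "ctrb_mat A B = mat_of_cols (dim_row A) (concat (map (\<lambda>k. cols ((A ^\<^sub>m k) * B)) [0..<dim_row A]))"

definition controllable :: "real mat \<Rightarrow> real mat \<Rightarrow> bool" where
  "controllable A B \<longleftrightarrow> mrank (dim_row A) (ctrb_mat A B) = dim_row A"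

definition nnz :: "real mat \<Rightarrow> nat" where
  "nnz M = card {(i, j). i < dim_row M \<and> j < dim_col M \<and> M $$ (i, j) \<noteq> 0}"

definition rc :: "real mat \<Rightarrow> real mat \<Rightarrow> nat" where
  "rc A B = Inf {nnz (hcat dA dB) | dA dB.
      dA \<in> carrier_mat (dim_row A) (dim_row A) \<and> dB \<in> carrier_mat (dim_row A) (dim_col B) \<and>
      controllable (A + dA) (B + dB)}"

definition id_cols :: "nat \<Rightarrow> nat set \<Rightarrow> real mat" where
  "id_cols n J = mat_of_cols n (map (unit_vec n) (sorted_list_of_set J))"

end

theory Submission
  imports Defs "HOL-Computational_Algebra.Polynomial"
begin

lemma mat_mult_zero_vec[simp]: "A \<in> carrier_mat nr n \<Longrightarrow> A *\<^sub>v 0\<^sub>v n = 0\<^sub>v nr"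
  by (rule eq_vecI) (auto simp: scalar_prod_def)

context vec_space begin

lemma span_sub_carrier: "X \<subseteq> carrier_vec n \<Longrightarrow> span X \<subseteq> carrier_vec n"
  using span_is_subset2 by auto

lemma span_add_vec: "X \<subseteq> carrier_vec n \<Longrightarrow> x \<in> span X \<Longrightarrow> y \<in> span X \<Longrightarrow> x + y \<in> span X"
  using span_add1[of X x y] by simp

lemma span_smult_vec: "X \<subseteq> carrier_vec n \<Longrightarrow> x \<in> span X \<Longrightarrow> c \<cdot>\<^sub>v x \<in> span X"
  using smult_in_span by auto

lemma span_mono_sub: "X \<subseteq> carrier_vec n \<Longrightarrow> Y \<subseteq> carrier_vec n \<Longrightarrow> X \<subseteq> span Y \<Longrightarrow> span X \<subseteq> span Y"
  using span_subsetI by auto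

lemma span_minus_vec: assumes "X \<subseteq> carrier_vec n" "x \<in> span X" "y \<in> span X"
  shows "x - y \<in> span X"
proof -
  have xc: "x \<in> carrier_vec n" "y \<in> carrier_vec n" using assms span_sub_carrier by auto
  have "x - y = x + (-1) \<cdot>\<^sub>v y" using xc by auto
  thus ?thesis using assms span_add_vec span_smult_vec by metis
qed

lemma span_mat_image:
  assumes A: "A \<in> carrier_mat n n" and X: "X \<subseteq> carrier_vec n" and Y: "Y \<subseteq> carrier_vec n"
    and img: "\<And>x. x \<in> X \<Longrightarrow> A *\<^sub>v x \<in> span Y"
  shows "x \<in> span X \<Longrightarrow> A *\<^sub>v x \<in> span Y"
proof -
  let ?H = "{x \<in> carrier_vec n. A *\<^sub>v x \<in> span Y}"
  have sm: "LinearCombinations.submodule class_ring ?H V"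
  proof (rule LinearCombinations.submodule.intro)
    show "Module.module class_ring V" by (rule vec_module)
    show "?H \<subseteq> carrier V" by auto
    show "\<And>v w. v \<in> ?H \<Longrightarrow> w \<in> ?H \<Longrightarrow> v \<oplus>\<^bsub>V\<^esub> w \<in> ?H"
      using A Y by (auto simp: mult_add_distrib_mat_vec intro!: span_add_vec)
    have "0\<^sub>v n \<in> span Y" by (intro in_spanI[of _ "\<lambda>_. 0" "{}"]) (auto simp: lincomb_def)
    thus "\<zero>\<^bsub>V\<^esub> \<in> ?H" using A by auto
    show "\<And>c v. c \<in> carrier class_ring \<Longrightarrow> v \<in> ?H \<Longrightarrow> c \<odot>\<^bsub>V\<^esub> v \<in> ?H"
      using A Y by (auto simp: mult_mat_vec intro!: span_smult_vec)
  qed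
  have "X \<subseteq> ?H" using X img by auto
  from span_is_subset[OF this sm] show "x \<in> span X \<Longrightarrow> A *\<^sub>v x \<in> span Y" by auto
qed

lemma supp_in_span:
  fixes x :: "'a vec"
  assumes x: "x \<in> carrier_vec n" and I: "I \<subseteq> {0..<n}" and z: "\<And>i. i < n \<Longrightarrow> i \<notin> I \<Longrightarrow> x $ i = 0"
  shows "x \<in> span (unit_vec n ` I)"
proof -
  have UI: "unit_vec n ` I \<subseteq> carrier_vec n" by auto
  have fin: "finite (unit_vec n ` I)" using I finite_subset by auto
  define a where "a = (\<lambda>u::'a vec. x $ (THE i. i < n \<and> u = unit_vec n i))"
  have inj: "inj_on (unit_vec n) I" using I by (auto simp: inj_on_def unit_vec_eq)
  have aj: "a (unit_vec n j) = x $ j" if "j \<in> I" for j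
  proof -
    have "(THE i. i < n \<and> unit_vec n j = unit_vec n i) = j"
      using that I by (intro the_equality) (auto simp: unit_vec_eq)
    thus ?thesis unfolding a_def by (rule arg_cong)
  qed
  have "lincomb a (unit_vec n ` I) = x"
  proof (rule eq_vecI)
    show "dim_vec (lincomb a (unit_vec n ` I)) = dim_vec x" using x lincomb_dim[OF fin UI]
      by simp
    fix i assume "i < dim_vec x"
    hence i: "i < n" using x by auto
    have "lincomb a (unit_vec n ` I) $ i = (\<Sum>u\<in>unit_vec n ` I. a u * u $ i)"
      by (rule lincomb_index[OF i UI])
    also have "\<dots> = (\<Sum>j\<in>I. a (unit_vec n j) * unit_vec n j $ i)"
      by (subst sum.reindex[OF inj]) auto
    also have "\<dots> = (\<Sum>j\<in>I. if j = i then x $ i else 0)"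
      using I i by (intro sum.cong) (auto simp: aj)
    also have "\<dots> = x $ i" using z[OF i] fin I by (cases "i \<in> I") (auto simp: finite_subset)
    finally show "lincomb a (unit_vec n ` I) $ i = x $ i" .
  qed
  thus ?thesis using fin by (intro in_spanI[of x a "unit_vec n ` I"]) auto
qed

lemma rank_full_iff:
  assumes M: "M \<in> carrier_mat n nc"
  shows "rank M = n \<longleftrightarrow> span (set (cols M)) = carrier_vec n"
proof
  have C: "set (cols M) \<subseteq> carrier_vec n" using M cols_dim by blast
  assume r: "rank M = n"
  obtain S where S: "maximal S (\<lambda>T. T \<subseteq> set (cols M) \<and> lin_indpt T)"
    using maximal_exists[of "(\<lambda>T. T \<subseteq> set (cols M) \<and> lin_indpt T)" "card (set (cols M))" "{}"]
    by (meson List.finite_set card_mono empty_iff empty_subsetI finite_lin_indpt2 rev_finite_subset)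
  have cS: "card S = n" using rank_card_indpt[OF M S] r by simp
  have SS: "S \<subseteq> set (cols M)" "lin_indpt S" using S unfolding maximal_def by auto
  have fS: "finite S" using SS(1) finite_subset by blast
  have "basis S" using SS C cS fS by (intro dim_li_is_basis) (auto simp: dim_is_n)
  hence "span S = carrier_vec n" unfolding basis_def by auto
  moreover have "span S \<subseteq> span (set (cols M))" using SS(1) span_is_monotone by auto
  moreover have "span (set (cols M)) \<subseteq> carrier_vec n" using C span_sub_carrier by auto
  ultimately show "span (set (cols M)) = carrier_vec n" by auto
next
  assume sp: "span (set (cols M)) = carrier_vec n"
  have e: "vs (carrier_vec n) = V" by (simp add: module_vec_def)
  show "rank M = n" unfolding rank_def sp e using dim_is_n by simp
qed

end

definition rspan :: "nat \<Rightarrow> real vec set \<Rightarrow> real vec set" where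
  "rspan n S = LinearCombinations.module.span class_ring (module_vec TYPE(real) n) S"


lemma set_cols_eq: "set (cols X) = {col X j | j. j < dim_col X}"
  unfolding cols_def by auto

lemma ctrb_cols:
  assumes A: "A \<in> carrier_mat n n" and B: "B \<in> carrier_mat n m"
  shows "set (cols (ctrb_mat A B)) = {(A ^\<^sub>m k) *\<^sub>v col B j | k j. k < n \<and> j < m}"
proof -
  have Ak: "A ^\<^sub>m k \<in> carrier_mat n n" for k using A by auto
  have cl: "set (concat (map (\<lambda>k. cols ((A ^\<^sub>m k) * B)) [0..<n])) = {(A ^\<^sub>m k) *\<^sub>v col B j | k j. k < n \<and> j < m}"
  proof -
    have cm: "col ((A ^\<^sub>m k) * B) j = (A ^\<^sub>m k) *\<^sub>v col B j" if "j<m" for k j using col_mult2[OF Ak B that] .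
    have dc: "dim_col ((A ^\<^sub>m k) * B) = m" for k using B by simp
    have Bm: "dim_col B = m" using B by simp
    have mc: "x \<in> set (cols X) \<longleftrightarrow> (\<exists>j<dim_col X. x = col X j)" for x and X :: "real mat"
      unfolding cols_def by auto
    show ?thesis
    proof (intro equalityI subsetI)
      fix x assume "x \<in> set (concat (map (\<lambda>k. cols ((A ^\<^sub>m k) * B)) [0..<n]))"
      then obtain ys where ys: "ys \<in> set (map (\<lambda>k. cols ((A ^\<^sub>m k) * B)) [0..<n])" "x \<in> set ys"
        unfolding set_concat by blast
      from ys(1) obtain k where kk: "k \<in> set [0..<n]" "ys = cols ((A ^\<^sub>m k) * B)" unfolding set_map by blast
      have k: "k<n" "x \<in> set (cols ((A ^\<^sub>m k) * B))" using kk(1) apply simp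
        using ys(2) unfolding kk(2) .
      then obtain j where j: "j<m" "x = col ((A ^\<^sub>m k) * B) j" unfolding mc dc by blast
      have "x = (A ^\<^sub>m k) *\<^sub>v col B j" using j cm[of j k] by simp
      thus "x \<in> {(A ^\<^sub>m k) *\<^sub>v col B j | k j. k < n \<and> j < m}" using k(1) j(1) by blast
    next
      fix x assume "x \<in> {(A ^\<^sub>m k) *\<^sub>v col B j | k j. k < n \<and> j < m}"
      then obtain k j where kj: "k<n" "j<m" "x = (A ^\<^sub>m k) *\<^sub>v col B j" by auto
      hence "x = col ((A ^\<^sub>m k) * B) j" using kj cm[of j k] by simp
      hence "x \<in> set (cols ((A ^\<^sub>m k) * B))" unfolding mc dc using kj(2) by blast
      moreover have "cols ((A ^\<^sub>m k) * B) \<in> set (map (\<lambda>k. cols ((A ^\<^sub>m k) * B)) [0..<n])"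
        using kj(1) by simp
      ultimately show "x \<in> set (concat (map (\<lambda>k. cols ((A ^\<^sub>m k) * B)) [0..<n]))"
        unfolding set_concat by blast
    qed
  qed
  have "set (concat (map (\<lambda>k. cols ((A ^\<^sub>m k) * B)) [0..<n])) \<subseteq> carrier_vec n"
    unfolding cl
  proof
    fix x assume "x \<in> {(A ^\<^sub>m k) *\<^sub>v col B j | k j. k < n \<and> j < m}"
    then obtain k j where "j<m" "x = (A ^\<^sub>m k) *\<^sub>v col B j" by blast
    thus "x \<in> carrier_vec n" using Ak[of k] B by (metis mult_mat_vec_carrier col_carrier_vec)
  qed
  thus ?thesis unfolding ctrb_mat_def using A cl by simp
qed

lemma ctrb_carrier: "A \<in> carrier_mat n n \<Longrightarrow> ctrb_mat A B \<in> carrier_mat n (dim_col (ctrb_mat A B))"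
  unfolding ctrb_mat_def by auto

lemma controllable_iff:
  assumes A: "A \<in> carrier_mat n n" and B: "B \<in> carrier_mat n m"
  shows "controllable A B \<longleftrightarrow> rspan n {(A ^\<^sub>m k) *\<^sub>v col B j | k j. k < n \<and> j < m} = carrier_vec n"
proof -
  have "dim_row A = n" using A by auto
  thus ?thesis unfolding controllable_def mrank_def
    using vec_space.rank_full_iff[where n=n and M="ctrb_mat A B", OF ctrb_carrier[OF A]] ctrb_cols[OF A B]
    by (simp add: rspan_def)
qed


lemma pow_mat_Suc': "X \<in> carrier_mat n n \<Longrightarrow> X ^\<^sub>m Suc k = X * X ^\<^sub>m k"
proof (induct k)
  case 0 thus ?case by simp
next
  case (Suc k)
  have "X ^\<^sub>m Suc (Suc k) = (X * X ^\<^sub>m k) * X" using Suc by simp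
  also have "\<dots> = X * (X ^\<^sub>m k * X)" using Suc(2) by (intro assoc_mult_mat) auto
  finally show ?case by simp
qed

lemma pow_mult_vec_Suc: assumes "X \<in> carrier_mat n n" "x \<in> carrier_vec n" shows
   "(X ^\<^sub>m Suc k) *\<^sub>v x = X *\<^sub>v ((X ^\<^sub>m k) *\<^sub>v x)"
  unfolding pow_mat_Suc'[OF assms(1)] using assms by (intro assoc_mult_mat_vec) auto

lemma pow_mult_vec_0: "x \<in> carrier_vec n \<Longrightarrow> (X ^\<^sub>m 0) *\<^sub>v x = x" if "X \<in> carrier_mat n n"
  using that by simp

lemma controllable_iff2:
  assumes A: "A \<in> carrier_mat n n" and B: "B \<in> carrier_mat n m"
  shows "controllable A B \<longleftrightarrow> rspan n {(A ^\<^sub>m k) *\<^sub>v c | k c. k < n \<and> c \<in> set (cols B)} = carrier_vec n"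
proof -
  have "{(A ^\<^sub>m k) *\<^sub>v col B j | k j. k < n \<and> j < m} = {(A ^\<^sub>m k) *\<^sub>v c | k c. k < n \<and> c \<in> set (cols B)}"
    using B unfolding set_cols_eq by blast
  thus ?thesis using controllable_iff[OF A B] by simp
qed

lemma rspan_mono: "X \<subseteq> carrier_vec n \<Longrightarrow> Y \<subseteq> carrier_vec n \<Longrightarrow> X \<subseteq> rspan n Y \<Longrightarrow> rspan n X \<subseteq> rspan n Y"
  unfolding rspan_def using vec_space.span_mono_sub by metis

lemma rspan_sub: "X \<subseteq> carrier_vec n \<Longrightarrow> rspan n X \<subseteq> carrier_vec n"
  unfolding rspan_def using vec_space.span_sub_carrier by metis

lemma (in vec_space) own_span: "X \<subseteq> carrier_vec n \<Longrightarrow> X \<subseteq> span X"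
  using in_own_span by auto

lemma rspan_own: "X \<subseteq> carrier_vec n \<Longrightarrow> X \<subseteq> rspan n X"
  unfolding rspan_def using vec_space.own_span by metis

lemma rspan_add: "X \<subseteq> carrier_vec n \<Longrightarrow> x \<in> rspan n X \<Longrightarrow> y \<in> rspan n X \<Longrightarrow> x + y \<in> rspan n X"
  unfolding rspan_def using vec_space.span_add_vec by metis

lemma rspan_smult: "X \<subseteq> carrier_vec n \<Longrightarrow> x \<in> rspan n X \<Longrightarrow> c \<cdot>\<^sub>v x \<in> rspan n X"
  unfolding rspan_def using vec_space.span_smult_vec by metis

lemma rspan_minus: "X \<subseteq> carrier_vec n \<Longrightarrow> x \<in> rspan n X \<Longrightarrow> y \<in> rspan n X \<Longrightarrow> x - y \<in> rspan n X"
  unfolding rspan_def using vec_space.span_minus_vec by metis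

lemma rspan_mat_image:
  "A \<in> carrier_mat n n \<Longrightarrow> X \<subseteq> carrier_vec n \<Longrightarrow> Y \<subseteq> carrier_vec n \<Longrightarrow>
   (\<And>x. x \<in> X \<Longrightarrow> A *\<^sub>v x \<in> rspan n Y) \<Longrightarrow> x \<in> rspan n X \<Longrightarrow> A *\<^sub>v x \<in> rspan n Y"
  unfolding rspan_def using vec_space.span_mat_image by metis

lemma rspan_supp:
  "x \<in> carrier_vec n \<Longrightarrow> I \<subseteq> {0..<n} \<Longrightarrow> (\<And>i. i < n \<Longrightarrow> i \<notin> I \<Longrightarrow> x $ i = 0) \<Longrightarrow>
   x \<in> rspan n (unit_vec n ` I)"
  unfolding rspan_def using vec_space.supp_in_span by metis

lemma cols_hcat_id:
  assumes B: "B \<in> carrier_mat n m" and J: "J \<subseteq> {0..<n}"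
  shows "set (cols (hcat B (id_cols n J))) = set (cols B) \<union> unit_vec n ` J"
    "hcat B (id_cols n J) \<in> carrier_mat n (dim_col (hcat B (id_cols n J)))"
proof -
  have fJ: "finite J" using J finite_subset by blast
  have ci: "cols (id_cols n J) = map (unit_vec n) (sorted_list_of_set J)"
    unfolding id_cols_def by (rule cols_mat_of_cols) auto
  have cb: "set (cols B) \<subseteq> carrier_vec n" using B cols_dim by blast
  have "set (cols B @ cols (id_cols n J)) \<subseteq> carrier_vec n" using cb ci by auto
  hence "cols (hcat B (id_cols n J)) = cols B @ cols (id_cols n J)"
    unfolding hcat_def using B by simp
  thus "set (cols (hcat B (id_cols n J))) = set (cols B) \<union> unit_vec n ` J"
    using ci fJ by simp
  show "hcat B (id_cols n J) \<in> carrier_mat n (dim_col (hcat B (id_cols n J)))"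
    unfolding hcat_def carrier_mat_def using B by simp
qed


lemma mv_carrier: "X \<in> carrier_mat n n \<Longrightarrow> x \<in> carrier_vec n \<Longrightarrow> X *\<^sub>v x \<in> carrier_vec n"
  by (rule mult_mat_vec_carrier)

lemma supp_mult:
  assumes D: "D \<in> carrier_mat n n" and y: "y \<in> carrier_vec n"
    and z: "\<And>j. j < n \<Longrightarrow> D $$ (i,j) = 0" and i: "i < n"
  shows "(D *\<^sub>v y) $ i = 0"
proof -
  have "(D *\<^sub>v y) $ i = row D i \<bullet> y" using D i by simp
  also have "\<dots> = (\<Sum>j\<in>{0..<n}. row D i $ j * y $ j)" using y unfolding scalar_prod_def by simp
  also have "\<dots> = 0" using D i z by (intro sum.neutral) simp
  finally show ?thesis .
qed

lemma part2_core:
  assumes A: "A \<in> carrier_mat n n" and B: "B \<in> carrier_mat n m"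
    and dA: "dA \<in> carrier_mat n n" and dB: "dB \<in> carrier_mat n m" and J: "J \<subseteq> {0..<n}"
    and zA: "\<And>i j. i < n \<Longrightarrow> j < n \<Longrightarrow> i \<notin> J \<Longrightarrow> dA $$ (i,j) = 0"
    and zB: "\<And>i j. i < n \<Longrightarrow> j < m \<Longrightarrow> i \<notin> J \<Longrightarrow> dB $$ (i,j) = 0"
    and ctrl: "controllable (A + dA) (B + dB)"
  shows "controllable A (hcat B (id_cols n J))"
proof -
  define H where "H = hcat B (id_cols n J)"
  define G where "G = set (cols B) \<union> unit_vec n ` J"
  have GH: "set (cols H) = G" unfolding H_def G_def by (rule cols_hcat_id(1)[OF B J])
  have Hc: "H \<in> carrier_mat n (dim_col H)" unfolding H_def by (rule cols_hcat_id(2)[OF B J])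
  have cB: "set (cols B) \<subseteq> carrier_vec n" using cols_dim[of B] B by simp
  have Gc: "G \<subseteq> carrier_vec n" unfolding G_def using cB by auto
  define K where "K k = {(A ^\<^sub>m s) *\<^sub>v g | s g. s \<le> k \<and> g \<in> G}" for k
  have Kc: "K k \<subseteq> carrier_vec n" for k
  proof
    fix x assume "x \<in> K k"
    then obtain s g where "g \<in> G" "x = (A ^\<^sub>m s) *\<^sub>v g" unfolding K_def by blast
    thus "x \<in> carrier_vec n" using Gc A by (metis mv_carrier pow_carrier_mat subsetD)
  qed
  define T where "T = {(A ^\<^sub>m k) *\<^sub>v c | k c. k < n \<and> c \<in> G}"
  have Tc: "T \<subseteq> carrier_vec n"
  proof
    fix x assume "x \<in> T"
    then obtain s g where "g \<in> G" "x = (A ^\<^sub>m s) *\<^sub>v g" unfolding T_def by blast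
    thus "x \<in> carrier_vec n" using Gc A by (metis mv_carrier pow_carrier_mat subsetD)
  qed
  have KT: "K k \<subseteq> T" if "k < n" for k unfolding K_def T_def using that by force
  have KK: "K k \<subseteq> K l" if "k \<le> l" for k l unfolding K_def using that by force
  have GK: "G \<subseteq> K 0"
  proof
    fix g assume g: "g \<in> G"
    hence "(A ^\<^sub>m 0) *\<^sub>v g = g" using Gc A by auto
    hence "g = (A ^\<^sub>m 0) *\<^sub>v g \<and> (0::nat) \<le> 0 \<and> g \<in> G" using g by simp
    thus "g \<in> K 0" unfolding K_def by blast
  qed
  have supp: "x \<in> rspan n (K k)" if x: "x \<in> carrier_vec n" and z: "\<And>i. i < n \<Longrightarrow> i \<notin> J \<Longrightarrow> x $ i = 0" for x k
  proof -
    have "x \<in> rspan n (unit_vec n ` J)" using rspan_supp[OF x J z] .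
    moreover have "unit_vec n ` J \<subseteq> rspan n (K k)"
      using GK KK[of 0 k] rspan_own[OF Kc[of k]] unfolding G_def by blast
    hence "rspan n (unit_vec n ` J) \<subseteq> rspan n (K k)"
      by (intro rspan_mono[OF _ Kc]) auto
    ultimately show ?thesis by auto
  qed
  define A' where "A' = A + dA"
  define B' where "B' = B + dB"
  have A'c: "A' \<in> carrier_mat n n" unfolding A'_def using A dA by simp
  have B'c: "B' \<in> carrier_mat n m" unfolding B'_def using B dB by simp
  have step: "A' *\<^sub>v x \<in> rspan n (K (Suc k))" if x: "x \<in> rspan n (K k)" for x k
  proof (rule rspan_mat_image[OF A'c Kc Kc _ x])
    fix y assume y: "y \<in> K k"
    then obtain s g where sg: "s \<le> k" "g \<in> G" "y = (A ^\<^sub>m s) *\<^sub>v g" unfolding K_def by blast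
    have yc: "y \<in> carrier_vec n" using y Kc by auto
    have gc: "g \<in> carrier_vec n" using sg Gc by auto
    have "A *\<^sub>v y = (A ^\<^sub>m Suc s) *\<^sub>v g" using pow_mult_vec_Suc[OF A gc] sg by simp
    hence "A *\<^sub>v y = (A ^\<^sub>m Suc s) *\<^sub>v g \<and> Suc s \<le> Suc k \<and> g \<in> G" using sg by simp
    hence "A *\<^sub>v y \<in> K (Suc k)" unfolding K_def by blast
    hence 1: "A *\<^sub>v y \<in> rspan n (K (Suc k))" using rspan_own[OF Kc] by auto
    have 2: "dA *\<^sub>v y \<in> rspan n (K (Suc k))"
      by (rule supp) (auto intro!: supp_mult[OF dA yc] zA simp: mv_carrier[OF dA yc])
    have "A' *\<^sub>v y = A *\<^sub>v y + dA *\<^sub>v y" unfolding A'_def using A dA yc by (rule add_mult_distrib_mat_vec)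
    thus "A' *\<^sub>v y \<in> rspan n (K (Suc k))" using 1 2 rspan_add[OF Kc] by simp
  qed
  have base: "c \<in> rspan n (K 0)" if c: "c \<in> set (cols B')" for c
  proof -
    obtain j where j: "j < m" "c = col B' j" using c B'c unfolding set_cols_eq by auto
    have ce: "c = col B j + col dB j" unfolding j B'_def using B dB j by simp
    have "col B j \<in> G" unfolding G_def using B j unfolding set_cols_eq by auto
    hence 1: "col B j \<in> rspan n (K 0)" using GK rspan_own[OF Kc] by auto
    have 2: "col dB j \<in> rspan n (K 0)"
      by (rule supp) (use dB j zB in auto)
    show ?thesis unfolding ce using 1 2 rspan_add[OF Kc] by simp
  qed
  have main: "(A' ^\<^sub>m k) *\<^sub>v c \<in> rspan n (K k)" if c: "c \<in> set (cols B')" for c k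
  proof (induct k)
    case 0
    have "c \<in> carrier_vec n" using c B'c cols_dim by blast
    thus ?case using base[OF c] A'c by simp
  next
    case (Suc k)
    have "c \<in> carrier_vec n" using c B'c cols_dim by blast
    thus ?case using step[OF Suc] pow_mult_vec_Suc[OF A'c] by simp
  qed
  have Tall: "{(A' ^\<^sub>m k) *\<^sub>v c | k c. k < n \<and> c \<in> set (cols B')} \<subseteq> rspan n T"
  proof
    fix x assume "x \<in> {(A' ^\<^sub>m k) *\<^sub>v c | k c. k < n \<and> c \<in> set (cols B')}"
    then obtain k c where kc: "k < n" "c \<in> set (cols B')" "x = (A' ^\<^sub>m k) *\<^sub>v c" by blast
    have "x \<in> rspan n (K k)" using main[OF kc(2)] kc(3) by simp
    moreover have "rspan n (K k) \<subseteq> rspan n T"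
      using KT[OF kc(1)] rspan_own[OF Tc] by (intro rspan_mono[OF Kc Tc]) auto
    ultimately show "x \<in> rspan n T" by auto
  qed
  have Xc: "{(A' ^\<^sub>m k) *\<^sub>v c | k c. k < n \<and> c \<in> set (cols B')} \<subseteq> carrier_vec n"
    using Tall rspan_sub[OF Tc] by auto
  have "rspan n {(A' ^\<^sub>m k) *\<^sub>v c | k c. k < n \<and> c \<in> set (cols B')} = carrier_vec n"
    using ctrl controllable_iff2[OF A'c B'c] unfolding A'_def B'_def by simp
  hence "carrier_vec n \<subseteq> rspan n T" using rspan_mono[OF Xc Tc Tall] by simp
  hence "rspan n T = carrier_vec n" using rspan_sub[OF Tc] by auto
  hence "rspan n {(A ^\<^sub>m k) *\<^sub>v c | k c. k < n \<and> c \<in> set (cols H)} = carrier_vec n"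
    unfolding GH T_def .
  thus ?thesis using controllable_iff2[OF A Hc] unfolding H_def by simp
qed


context vec_space begin

lemma span_coord_zero:
  fixes X :: "'a vec set"
  assumes X: "X \<subseteq> carrier_vec n" and i: "i < n" and z: "\<And>x. x \<in> X \<Longrightarrow> x $ i = 0"
    and y: "y \<in> span X"
  shows "y $ i = 0"
proof -
  obtain a T where T: "y = lincomb a T" "finite T" "T \<subseteq> X" using in_spanE[OF y] by blast
  have "y $ i = (\<Sum>x\<in>T. a x * x $ i)" unfolding T(1) using T X by (intro lincomb_index[OF i]) auto
  also have "\<dots> = 0" using T z by (intro sum.neutral) auto
  finally show ?thesis .
qed

lemma lin_indpt_single:
  fixes c :: "'a vec"
  assumes c: "c \<in> carrier_vec n" "c \<noteq> 0\<^sub>v n"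
  shows "lin_indpt {c}"
proof
  assume "lin_dep {c}"
  then obtain u where "u \<in> {c}" "u \<in> span ({c} - {u})" using lindep_span[of "{c}"] c by auto
  hence "c \<in> span {}" by auto
  thus False using span_empty c by auto
qed

lemma basis_ext:
  fixes U :: "'a vec set"
  assumes U: "U \<subseteq> carrier_vec n" and li: "lin_indpt U" and fU: "finite U"
  shows "\<exists>Q. Q \<subseteq> {0..<n} \<and> span (U \<union> unit_vec n ` Q) = carrier_vec n \<and> card U + card Q = n"
proof -
  define P where "P = (\<lambda>Q. Q \<subseteq> {0..<n} \<and> lin_indpt (U \<union> unit_vec n ` Q) \<and> U \<inter> unit_vec n ` Q = {})"
  have P0: "P {}" unfolding P_def using li by simp
  have bnd: "finite Q \<and> card Q \<le> n" if "P Q" for Q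
  proof -
    have "Q \<subseteq> {0..<n}" using that unfolding P_def by auto
    thus ?thesis using finite_subset card_mono[of "{0..<n}" Q] by auto
  qed
  obtain Q where fQ: "finite Q" and mQ: "maximal Q P" using maximal_exists[of P n "{}", OF bnd P0] by blast
  have PQ: "P Q" using mQ unfolding maximal_def by auto
  hence Qn: "Q \<subseteq> {0..<n}" and liQ: "lin_indpt (U \<union> unit_vec n ` Q)" and dj: "U \<inter> unit_vec n ` Q = {}"
    unfolding P_def by auto
  have UQc: "U \<union> unit_vec n ` Q \<subseteq> carrier_vec n" using U Qn by auto
  have ei: "unit_vec n i \<in> span (U \<union> unit_vec n ` Q)" if i: "i < n" for i
  proof (cases "unit_vec n i \<in> U \<union> unit_vec n ` Q")
    case True thus ?thesis using own_span[OF UQc] by auto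
  next
    case False
    hence iQ: "i \<notin> Q" by auto
    have "\<not> P (insert i Q)"
    proof
      assume "P (insert i Q)"
      hence "insert i Q = Q" using mQ unfolding maximal_def by blast
      thus False using iQ by auto
    qed
    moreover have "insert i Q \<subseteq> {0..<n}" using Qn i by auto
    moreover have "U \<inter> unit_vec n ` (insert i Q) = {}" using dj False by auto
    ultimately have "lin_dep (U \<union> unit_vec n ` Q \<union> {unit_vec n i})" unfolding P_def
      by (simp add: Un_assoc insert_commute)
    thus ?thesis using lin_dep_iff_in_span[OF UQc liQ _ False] by simp
  qed
  have "set (unit_vecs n) \<subseteq> span (U \<union> unit_vec n ` Q)"
    using ei unfolding unit_vecs_def by auto
  hence "span (set (unit_vecs n)) \<subseteq> span (U \<union> unit_vec n ` Q)"
    using UQc by (intro span_mono_sub) (auto simp: unit_vecs_def)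
  hence sp: "span (U \<union> unit_vec n ` Q) = carrier_vec n"
    using span_unit_vecs_is_carrier span_sub_carrier[OF UQc] by auto
  have inj: "inj_on (unit_vec n) Q" using Qn by (auto simp: inj_on_def unit_vec_eq)
  have cd: "card (U \<union> unit_vec n ` Q) = card U + card Q"
    using card_Un_disjoint[OF fU _ dj] fQ card_image[OF inj] by auto
  have fUQ: "finite (U \<union> unit_vec n ` Q)" using fU fQ by auto
  have "card (U \<union> unit_vec n ` Q) \<le> n" using li_le_dim(2)[OF fin_dim UQc liQ] dim_is_n by simp
  moreover have "card (U \<union> unit_vec n ` Q) \<ge> n" using gen_ge_dim[OF fUQ UQc] sp dim_is_n by simp
  ultimately show ?thesis using Qn sp cd by (intro exI[of _ Q]) auto
qed

lemma det_span_iff: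
  fixes M :: "'a mat"
  assumes M: "M \<in> carrier_mat n n"
  shows "det M \<noteq> 0 \<longleftrightarrow> span (set (cols M)) = carrier_vec n"
  using det_rank_iff[OF M] rank_full_iff[OF M] by simp

end


context vec_space begin

lemma chain_span:
  fixes y :: "nat \<Rightarrow> 'a vec" and ch :: "nat list" and c :: 'a and S :: "'a vec set"
  assumes S: "S \<subseteq> carrier_vec n"
  and ch: "distinct ch" "set ch \<subseteq> {0..<n}"
  and yc: "\<And>s. y s \<in> carrier_vec n"
  and yS: "\<And>s. 1 \<le> s \<Longrightarrow> s < length ch \<Longrightarrow> y s \<in> span S"
  and c: "c \<noteq> 0"
  and ydiag: "\<And>s. 1 \<le> s \<Longrightarrow> s < length ch \<Longrightarrow> y s $ (ch!s) = c"
  and ylow: "\<And>s k. 1 \<le> s \<Longrightarrow> s < length ch \<Longrightarrow> k < s \<Longrightarrow> y s $ (ch!k) = 0"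
  and yout: "\<And>s i. 1 \<le> s \<Longrightarrow> s < length ch \<Longrightarrow> i < n \<Longrightarrow> i \<notin> set ch \<Longrightarrow> y s $ i = 0"
  shows "1 \<le> k \<Longrightarrow> k < length ch \<Longrightarrow> unit_vec n (ch!k) \<in> span S"
proof -
  let ?L = "length ch"
  have chn: "ch ! k < n" if "k < ?L" for k using ch(2) that nth_mem by fastforce
  have main: "\<forall>k. ?L - j \<le> k \<longrightarrow> 1 \<le> k \<longrightarrow> k < ?L \<longrightarrow> unit_vec n (ch!k) \<in> span S" for j
  proof (induct j)
    case 0 show ?case by auto
  next
    case (Suc j)
    show ?case
    proof (intro allI impI)
      fix k assume k: "?L - Suc j \<le> k" "1 \<le> k" "k < ?L"
      show "unit_vec n (ch!k) \<in> span S"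
      proof (cases "?L - j \<le> k")
        case True thus ?thesis using Suc k by auto
      next
        case False
        hence kk: "k = ?L - Suc j" using k by auto
        define I where "I = {ch!k' | k'. k < k' \<and> k' < ?L}"
        have In: "I \<subseteq> {0..<n}" unfolding I_def using chn by auto
        define e :: "'a vec" where "e = unit_vec n (ch!k)"
        define w where "w = y k - c \<cdot>\<^sub>v e"
        have ec: "e \<in> carrier_vec n" unfolding e_def by simp
        have wc: "w \<in> carrier_vec n" unfolding w_def using yc ec by simp
        have wz: "w $ i = 0" if i: "i < n" "i \<notin> I" for i
        proof (cases "i \<in> set ch")
          case False
          have 1: "y k $ i = 0" using yout[OF k(2) k(3) i(1) False] .
          have "i \<noteq> ch!k" using False k(3) nth_mem by metis
          hence 2: "e $ i = 0" unfolding e_def using i(1) chn[OF k(3)] by simp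
          show ?thesis unfolding w_def using yc[of k] ec i(1) 1 2 by simp
        next
          case True
          then obtain k'' where k'': "k'' < ?L" "i = ch!k''" by (metis in_set_conv_nth)
          have "\<not> k < k''" using i(2) k'' unfolding I_def by blast
          hence "k'' < k \<or> k'' = k" by linarith
          thus ?thesis
          proof
            assume lt: "k'' < k"
            have 1: "y k $ i = 0" using ylow[OF k(2) k(3) lt] k''(2) by simp
            have "ch!k'' \<noteq> ch!k" using ch(1) k''(1) k(3) lt nth_eq_iff_index_eq by (metis less_irrefl)
            hence 2: "e $ i = 0" unfolding e_def using k''(2) i(1) chn[OF k(3)] by simp
            show ?thesis unfolding w_def using yc[of k] ec i(1) 1 2 by simp
          next
            assume eq: "k'' = k"
            have 1: "y k $ i = c" using ydiag[OF k(2) k(3)] eq k''(2) by simp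
            have 2: "e $ i = 1" unfolding e_def using eq k''(2) i(1) chn[OF k(3)] by simp
            show ?thesis unfolding w_def using yc[of k] ec i(1) 1 2 by simp
          qed
        qed
        have "w \<in> span (unit_vec n ` I)" using supp_in_span[OF wc In wz] by auto
        moreover have "(unit_vec n ` I :: 'a vec set) \<subseteq> span S"
        proof
          fix x :: "'a vec" assume "x \<in> unit_vec n ` I"
          then obtain k' where "k < k'" "k' < ?L" "x = unit_vec n (ch!k')" unfolding I_def by auto
          thus "x \<in> span S" using Suc kk by auto
        qed
        hence "span (unit_vec n ` I :: 'a vec set) \<subseteq> span S" using S span_mono_sub[of "unit_vec n ` I" S] In by force
        ultimately have wS: "w \<in> span S" by auto
        have ykS: "y k \<in> span S" using yS k by auto
        have "y k - w \<in> span S" using span_minus_vec[OF S ykS wS] .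
        hence "(1/c) \<cdot>\<^sub>v (y k - w) \<in> span S" using span_smult_vec[OF S] by auto
        moreover have "(1/c) \<cdot>\<^sub>v (y k - w) = e"
          by (rule eq_vecI) (use yc ec c in \<open>auto simp: w_def\<close>)
        ultimately show ?thesis unfolding e_def by simp
      qed
    qed
  qed
  assume "1 \<le> k" "k < ?L"
  thus "unit_vec n (ch!k) \<in> span S" using main[of ?L] by auto
qed

end

definition chain_mat :: "nat \<Rightarrow> nat list \<Rightarrow> real mat" where
  "chain_mat n ch = mat n n (\<lambda>(i,j). if \<exists>k. Suc k < length ch \<and> i = ch!(Suc k) \<and> j = ch!k then 1 else 0)"

lemma chain_mat_carrier: "chain_mat n ch \<in> carrier_mat n n"
  unfolding chain_mat_def by simp

lemma chain_row_sum:
  assumes x: "x \<in> carrier_vec n" and i: "i < n"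
  shows "(chain_mat n ch *\<^sub>v x) $ i = (\<Sum>j\<in>{0..<n}. chain_mat n ch $$ (i,j) * x $ j)"
proof -
  have "(chain_mat n ch *\<^sub>v x) $ i = row (chain_mat n ch) i \<bullet> x" using i chain_mat_carrier[of n ch] by simp
  also have "\<dots> = (\<Sum>j\<in>{0..<n}. chain_mat n ch $$ (i,j) * x $ j)"
    using x i chain_mat_carrier[of n ch] unfolding scalar_prod_def by simp
  finally show ?thesis .
qed

lemma chain_step:
  assumes ch: "distinct ch" "set ch \<subseteq> {0..<n}" and x: "x \<in> carrier_vec n" and k: "Suc k < length ch"
  shows "(chain_mat n ch *\<^sub>v x) $ (ch!(Suc k)) = x $ (ch!k)"
proof -
  have chn: "ch ! k < n" if "k < length ch" for k using ch(2) that nth_mem by fastforce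
  let ?i = "ch!(Suc k)"
  have ent: "chain_mat n ch $$ (?i, j) = (if j = ch!k then 1 else 0)" if j: "j < n" for j
  proof -
    have "(\<exists>k'. Suc k' < length ch \<and> ?i = ch!(Suc k') \<and> j = ch!k') \<longleftrightarrow> j = ch!k"
    proof
      assume "\<exists>k'. Suc k' < length ch \<and> ?i = ch!(Suc k') \<and> j = ch!k'"
      then obtain k' where k': "Suc k' < length ch" "?i = ch!(Suc k')" "j = ch!k'" by blast
      have "Suc k' = Suc k" using k' k ch(1) nth_eq_iff_index_eq by metis
      thus "j = ch!k" using k' by simp
    next
      assume "j = ch!k" thus "\<exists>k'. Suc k' < length ch \<and> ?i = ch!(Suc k') \<and> j = ch!k'" using k by blast
    qed
    thus ?thesis unfolding chain_mat_def using j chn[OF k] by simp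
  qed
  have "(chain_mat n ch *\<^sub>v x) $ ?i = (\<Sum>j\<in>{0..<n}. chain_mat n ch $$ (?i,j) * x $ j)"
    by (rule chain_row_sum[OF x chn[OF k]])
  also have "\<dots> = (\<Sum>j\<in>{0..<n}. if j = ch!k then x $ j else 0)"
    by (intro sum.cong) (auto simp: ent)
  also have "\<dots> = x $ (ch!k)" using chn[of k] k by simp
  finally show ?thesis .
qed

lemma chain_zero:
  assumes x: "x \<in> carrier_vec n" and i: "i < n" and ni: "\<And>k. Suc k < length ch \<Longrightarrow> i \<noteq> ch!(Suc k)"
  shows "(chain_mat n ch *\<^sub>v x) $ i = 0"
proof -
  have "(chain_mat n ch *\<^sub>v x) $ i = (\<Sum>j\<in>{0..<n}. chain_mat n ch $$ (i,j) * x $ j)"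
    by (rule chain_row_sum[OF x i])
  also have "\<dots> = 0" using ni i unfolding chain_mat_def by (intro sum.neutral) auto
  finally show ?thesis .
qed

lemma chain_pow:
  assumes ch: "distinct ch" "set ch \<subseteq> {0..<n}" and x: "x \<in> carrier_vec n"
  shows "k < length ch \<Longrightarrow> ((chain_mat n ch ^\<^sub>m s) *\<^sub>v x) $ (ch!k) = (if s \<le> k then x $ (ch!(k-s)) else 0)"
proof (induct s arbitrary: k)
  case 0
  thus ?case using x chain_mat_carrier[of n ch] by simp
next
  case (Suc s)
  note IH = Suc.hyps and kL = Suc.prems
  let ?N = "chain_mat n ch"
  have N: "?N \<in> carrier_mat n n" by (rule chain_mat_carrier)
  have yc: "(?N ^\<^sub>m s) *\<^sub>v x \<in> carrier_vec n" using N x by (metis mult_mat_vec_carrier pow_carrier_mat)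
  have e: "(?N ^\<^sub>m Suc s) *\<^sub>v x = ?N *\<^sub>v ((?N ^\<^sub>m s) *\<^sub>v x)" by (rule pow_mult_vec_Suc[OF N x])
  show ?case
  proof (cases k)
    case 0
    have L0: "0 < length ch" using kL 0 by simp
    have "ch!0 \<in> set ch" using L0 by (rule nth_mem)
    hence chn: "ch ! 0 < n" using ch(2) by auto
    have "ch!0 \<noteq> ch!(Suc k')" if "Suc k' < length ch" for k'
      using nth_eq_iff_index_eq[OF ch(1) L0 that] by simp
    hence "(?N *\<^sub>v ((?N ^\<^sub>m s) *\<^sub>v x)) $ (ch!0) = 0" using chain_zero[OF yc chn] by blast
    thus ?thesis unfolding e using 0 by simp
  next
    case (Suc k')
    have "(?N *\<^sub>v ((?N ^\<^sub>m s) *\<^sub>v x)) $ (ch!(Suc k')) = ((?N ^\<^sub>m s) *\<^sub>v x) $ (ch!k')"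
      using chain_step[OF ch yc] kL Suc by simp
    moreover have "k' < length ch" using kL Suc by simp
    ultimately show ?thesis unfolding e using IH[of k'] Suc by simp
  qed
qed

lemma chain_pow_out:
  assumes ch: "distinct ch" "set ch \<subseteq> {0..<n}" and x: "x \<in> carrier_vec n"
    and i: "i < n" "i \<notin> set ch"
  shows "((chain_mat n ch ^\<^sub>m Suc s) *\<^sub>v x) $ i = 0"
proof -
  let ?N = "chain_mat n ch"
  have N: "?N \<in> carrier_mat n n" by (rule chain_mat_carrier)
  have yc: "(?N ^\<^sub>m s) *\<^sub>v x \<in> carrier_vec n" using N x by (metis mult_mat_vec_carrier pow_carrier_mat)
  have "i \<noteq> ch!(Suc k)" if "Suc k < length ch" for k using i(2) that nth_mem by metis
  thus ?thesis unfolding pow_mult_vec_Suc[OF N x] using chain_zero[OF yc i(1)] by simp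
qed


lemma poly_pow_vec:
  fixes X0 X1 :: "real mat"
  assumes X0: "X0 \<in> carrier_mat n n" and X1: "X1 \<in> carrier_mat n n" and x: "x \<in> carrier_vec n"
  shows "\<exists>q. \<forall>e i. i < n \<longrightarrow> (((e \<cdot>\<^sub>m X1 + X0) ^\<^sub>m s) *\<^sub>v x) $ i = poly (q i) e"
proof (induct s)
  case 0
  have "((e \<cdot>\<^sub>m X1 + X0) ^\<^sub>m 0) *\<^sub>v x = x" for e using X0 X1 x by simp
  thus ?case by (intro exI[of _ "\<lambda>i. [:x $ i:]"]) simp
next
  case (Suc s)
  then obtain q where q: "\<And>e i. i < n \<Longrightarrow> (((e \<cdot>\<^sub>m X1 + X0) ^\<^sub>m s) *\<^sub>v x) $ i = poly (q i) e" by blast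
  define q' where "q' i = (\<Sum>j\<in>{0..<n}. [:X0 $$ (i,j), X1 $$ (i,j):] * q j)" for i
  have "(((e \<cdot>\<^sub>m X1 + X0) ^\<^sub>m Suc s) *\<^sub>v x) $ i = poly (q' i) e" if i: "i < n" for e i
  proof -
    let ?X = "e \<cdot>\<^sub>m X1 + X0"
    have Xc: "?X \<in> carrier_mat n n" using X0 X1 by simp
    have yc: "(?X ^\<^sub>m s) *\<^sub>v x \<in> carrier_vec n" using Xc x by (metis mult_mat_vec_carrier pow_carrier_mat)
    have dr: "dim_row ?X = n" using X0 by simp
    have "(((e \<cdot>\<^sub>m X1 + X0) ^\<^sub>m Suc s) *\<^sub>v x) $ i = (?X *\<^sub>v ((?X ^\<^sub>m s) *\<^sub>v x)) $ i"
      using pow_mult_vec_Suc[OF Xc x] by simp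
    also have "\<dots> = row ?X i \<bullet> ((?X ^\<^sub>m s) *\<^sub>v x)" by (rule index_mult_mat_vec) (use X0 i in simp)
    also have "\<dots> = (\<Sum>j\<in>{0..<n}. row ?X i $ j * ((?X ^\<^sub>m s) *\<^sub>v x) $ j)"
    proof -
      have dv: "dim_vec ((?X ^\<^sub>m s) *\<^sub>v x) = n" using yc X0 by simp
      show ?thesis by (simp only: scalar_prod_def dv)
    qed
    also have "\<dots> = (\<Sum>j\<in>{0..<n}. poly ([:X0 $$ (i,j), X1 $$ (i,j):] * q j) e)"
    proof (intro sum.cong refl)
      fix j assume "j \<in> {0..<n}"
      hence j: "j < n" by simp
      have "row ?X i $ j = e * X1 $$ (i,j) + X0 $$ (i,j)" using i j X0 X1 by simp
      thus "row ?X i $ j * ((?X ^\<^sub>m s) *\<^sub>v x) $ j = poly ([:X0 $$ (i,j), X1 $$ (i,j):] * q j) e"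
        using q[OF j, of e] by (simp add: algebra_simps)
    qed
    also have "\<dots> = poly (q' i) e" unfolding q'_def poly_sum ..
    finally show ?thesis .
  qed
  thus ?case by blast
qed

lemma det_poly:
  fixes M :: "real \<Rightarrow> real mat"
  assumes M: "\<And>e. M e \<in> carrier_mat n n"
    and P: "\<And>e i j. i < n \<Longrightarrow> j < n \<Longrightarrow> M e $$ (i,j) = poly (P i j) e"
  shows "\<exists>D. \<forall>e. det (M e) = poly D e"
proof -
  define D where "D = (\<Sum>p\<in>{p. p permutes {0..<n}}. [:signof p:] * (\<Prod>i=0..<n. P i (p i)))"
  have "det (M e) = poly D e" for e
  proof -
    have "det (M e) = (\<Sum>p\<in>{p. p permutes {0..<n}}. signof p * (\<Prod>i=0..<n. M e $$ (i, p i)))"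
      by (rule det_def'[OF M])
    also have "\<dots> = (\<Sum>p\<in>{p. p permutes {0..<n}}. poly ([:signof p:] * (\<Prod>i=0..<n. P i (p i))) e)"
    proof (intro sum.cong refl)
      fix p assume "p \<in> {p. p permutes {0..<n}}"
      hence p: "p permutes {0..<n}" by simp
      have "(\<Prod>i=0..<n. M e $$ (i, p i)) = (\<Prod>i=0..<n. poly (P i (p i)) e)"
      proof (intro prod.cong refl)
        fix i assume i: "i \<in> {0..<n}"
        have pi: "p i \<in> {0..<n}" using permutes_in_image[OF p] i by simp
        show "M e $$ (i, p i) = poly (P i (p i)) e" using P[of i "p i" e] i pi by simp
      qed
      thus "signof p * (\<Prod>i=0..<n. M e $$ (i, p i)) = poly ([:signof p:] * (\<Prod>i=0..<n. P i (p i))) e"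
        by (simp add: poly_prod)
    qed
    also have "\<dots> = poly D e" unfolding D_def poly_sum ..
    finally show ?thesis .
  qed
  thus ?thesis by blast
qed

lemma poly_nonroot:
  fixes D :: "real poly"
  assumes "poly D 0 \<noteq> 0"
  shows "\<exists>e. e \<noteq> 0 \<and> poly D e \<noteq> 0"
proof -
  have "D \<noteq> 0" using assms by auto
  hence "finite {x. poly D x = 0}" by (rule poly_roots_finite)
  hence "finite (insert 0 {x. poly D x = 0})" by simp
  from ex_new_if_finite[OF infinite_UNIV_char_0 this]
  obtain e :: real where "e \<notin> insert 0 {x. poly D x = 0}" by blast
  thus ?thesis by auto
qed


lemma smult_mat_vec: fixes X :: "real mat" assumes X: "X \<in> carrier_mat n n" and v: "v \<in> carrier_vec n"
  shows "(c \<cdot>\<^sub>m X) *\<^sub>v v = c \<cdot>\<^sub>v (X *\<^sub>v v)"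
proof (rule eq_vecI)
  show "dim_vec ((c \<cdot>\<^sub>m X) *\<^sub>v v) = dim_vec (c \<cdot>\<^sub>v (X *\<^sub>v v))" using X by simp
  fix i assume "i < dim_vec (c \<cdot>\<^sub>v (X *\<^sub>v v))"
  hence i: "i < n" using X by simp
  have "((c \<cdot>\<^sub>m X) *\<^sub>v v) $ i = row (c \<cdot>\<^sub>m X) i \<bullet> v" using i X by simp
  also have "\<dots> = (\<Sum>j\<in>{0..<n}. (c * X $$ (i,j)) * v $ j)"
    unfolding scalar_prod_def using v X i by (intro sum.cong) auto
  also have "\<dots> = c * (\<Sum>j\<in>{0..<n}. X $$ (i,j) * v $ j)" by (simp add: sum_distrib_left mult.assoc)
  also have "(\<Sum>j\<in>{0..<n}. X $$ (i,j) * v $ j) = row X i \<bullet> v"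
    unfolding scalar_prod_def using v X i by (intro sum.cong) auto
  also have "row X i \<bullet> v = (X *\<^sub>v v) $ i" using i X by simp
  finally show "((c \<cdot>\<^sub>m X) *\<^sub>v v) $ i = (c \<cdot>\<^sub>v (X *\<^sub>v v)) $ i" using i X by simp
qed

lemma smult_pow_vec: fixes X :: "real mat" assumes X: "X \<in> carrier_mat n n" and v: "v \<in> carrier_vec n"
  shows "((c \<cdot>\<^sub>m X) ^\<^sub>m s) *\<^sub>v v = (c ^ s) \<cdot>\<^sub>v ((X ^\<^sub>m s) *\<^sub>v v)"
proof (induct s)
  case 0 thus ?case using X v by simp
next
  case (Suc s)
  have cX: "c \<cdot>\<^sub>m X \<in> carrier_mat n n" using X by simp
  have yc: "(X ^\<^sub>m s) *\<^sub>v v \<in> carrier_vec n" using X v by (metis mult_mat_vec_carrier pow_carrier_mat)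
  have "((c \<cdot>\<^sub>m X) ^\<^sub>m Suc s) *\<^sub>v v = (c \<cdot>\<^sub>m X) *\<^sub>v (((c \<cdot>\<^sub>m X) ^\<^sub>m s) *\<^sub>v v)"
    by (rule pow_mult_vec_Suc[OF cX v])
  also have "\<dots> = (c \<cdot>\<^sub>m X) *\<^sub>v ((c ^ s) \<cdot>\<^sub>v ((X ^\<^sub>m s) *\<^sub>v v))" using Suc by simp
  also have "\<dots> = c \<cdot>\<^sub>v (X *\<^sub>v ((c ^ s) \<cdot>\<^sub>v ((X ^\<^sub>m s) *\<^sub>v v)))"
    using smult_mat_vec[OF X] yc by simp
  also have "\<dots> = c \<cdot>\<^sub>v ((c ^ s) \<cdot>\<^sub>v (X *\<^sub>v ((X ^\<^sub>m s) *\<^sub>v v)))"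
    using X yc by (simp add: mult_mat_vec)
  also have "X *\<^sub>v ((X ^\<^sub>m s) *\<^sub>v v) = (X ^\<^sub>m Suc s) *\<^sub>v v"
    using pow_mult_vec_Suc[OF X v] by simp
  finally show ?case by (simp add: smult_smult_assoc)
qed

lemma nnz_chain:
  assumes ch: "distinct ch" "set ch \<subseteq> {0..<n}" and c: "c \<noteq> 0"
  shows "nnz (c \<cdot>\<^sub>m chain_mat n ch) = length ch - 1"
proof -
  let ?N = "chain_mat n ch"
  have chn: "ch ! k < n" if "k < length ch" for k using ch(2) that nth_mem by fastforce
  define f where "f k = (ch ! Suc k, ch ! k)" for k
  have "{(i, j). i < dim_row (c \<cdot>\<^sub>m ?N) \<and> j < dim_col (c \<cdot>\<^sub>m ?N) \<and> (c \<cdot>\<^sub>m ?N) $$ (i, j) \<noteq> 0}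
        = f ` {k. Suc k < length ch}"
  proof (intro equalityI subsetI)
    fix x assume "x \<in> {(i, j). i < dim_row (c \<cdot>\<^sub>m ?N) \<and> j < dim_col (c \<cdot>\<^sub>m ?N) \<and> (c \<cdot>\<^sub>m ?N) $$ (i, j) \<noteq> 0}"
    then obtain i j where x: "x = (i,j)" "i < n" "j < n" "(c \<cdot>\<^sub>m ?N) $$ (i, j) \<noteq> 0"
      unfolding chain_mat_def by auto
    hence "?N $$ (i,j) \<noteq> 0" using chain_mat_carrier[of n ch] by simp
    hence "\<exists>k. Suc k < length ch \<and> i = ch!(Suc k) \<and> j = ch!k" using x unfolding chain_mat_def
      by (simp split: if_splits) blast
    then obtain k where k: "Suc k < length ch" "i = ch!(Suc k)" "j = ch!k" by blast
    have "x = f k" unfolding f_def using x(1) k by simp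
    thus "x \<in> f ` {k. Suc k < length ch}" using k(1) by blast
  next
    fix x assume "x \<in> f ` {k. Suc k < length ch}"
    then obtain k where k: "Suc k < length ch" "x = (ch!Suc k, ch!k)" unfolding f_def by auto
    have ex: "\<exists>k'. Suc k' < length ch \<and> ch!Suc k = ch!(Suc k') \<and> ch!k = ch!k'" using k by blast
    have "?N $$ (ch!Suc k, ch!k) = 1" unfolding chain_mat_def using ex chn[of k] chn[of "Suc k"] k by simp
    hence "(c \<cdot>\<^sub>m ?N) $$ (ch!Suc k, ch!k) \<noteq> 0" using c k chn[of k] chn[of "Suc k"] chain_mat_carrier[of n ch] by simp
    thus "x \<in> {(i, j). i < dim_row (c \<cdot>\<^sub>m ?N) \<and> j < dim_col (c \<cdot>\<^sub>m ?N) \<and> (c \<cdot>\<^sub>m ?N) $$ (i, j) \<noteq> 0}"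
      using k chn[of k] chn[of "Suc k"] chain_mat_carrier[of n ch] by simp
  qed
  moreover have "inj_on f {k. Suc k < length ch}"
  proof
    fix k k' assume "k \<in> {k. Suc k < length ch}" "k' \<in> {k. Suc k < length ch}" "f k = f k'"
    thus "k = k'" unfolding f_def using nth_eq_iff_index_eq[OF ch(1)] by auto
  qed
  moreover have "card {k. Suc k < length ch} = length ch - 1"
  proof -
    have "{k. Suc k < length ch} = {0..<length ch - 1}" by auto
    thus ?thesis by simp
  qed
  ultimately show ?thesis unfolding nnz_def by (simp add: card_image)
qed


lemma part1_core:
  fixes A B :: "real mat"
  assumes A: "A \<in> carrier_mat n n" and B: "B \<in> carrier_mat n m" and r1: "mrank n B \<ge> 1"
  shows "\<exists>dA \<in> carrier_mat n n. nnz dA \<le> n - mrank n B \<and> controllable (A + dA) B"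
proof -
  interpret V: vec_space "TYPE(real)" n .
  have sp: "V.span X = rspan n X" for X unfolding rspan_def by simp
  have cB: "set (cols B) \<subseteq> carrier_vec n" using cols_dim[of B] B by simp
  obtain U where U: "maximal U (\<lambda>T. T \<subseteq> set (cols B) \<and> V.lin_indpt T)"
    using maximal_exists[of "(\<lambda>T. T \<subseteq> set (cols B) \<and> V.lin_indpt T)" "card (set (cols B))" "{}"]
    by (meson List.finite_set card_mono empty_iff empty_subsetI V.finite_lin_indpt2 rev_finite_subset)
  have rU: "mrank n B = card U" unfolding mrank_def using V.rank_card_indpt[OF B U] .
  have UB: "U \<subseteq> set (cols B)" and liU: "V.lin_indpt U" using U unfolding maximal_def by auto
  have fU: "finite U" using UB finite_subset by blast
  have Uc: "U \<subseteq> carrier_vec n" using UB cB by auto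
  obtain Q where Qn: "Q \<subseteq> {0..<n}" and spQ: "V.span (U \<union> unit_vec n ` Q) = carrier_vec n"
    and cQ: "card U + card Q = n"
    using V.basis_ext[OF Uc liU fU] by blast
  have fQ: "finite Q" using Qn finite_subset by blast
  have Qlt: "card Q < n" using cQ rU r1 by linarith
  have "\<exists>b \<in> set (cols B). \<exists>p<n. p \<notin> Q \<and> b $ p \<noteq> 0"
  proof (rule ccontr)
    assume nb: "\<not> (\<exists>b \<in> set (cols B). \<exists>p<n. p \<notin> Q \<and> b $ p \<noteq> 0)"
    have "\<not> {0..<n} \<subseteq> Q"
    proof
      assume "{0..<n} \<subseteq> Q"
      hence "card {0..<n} \<le> card Q" by (rule card_mono[OF fQ])
      thus False using Qlt by simp
    qed
    then obtain i where i0: "i \<in> {0..<n}" "i \<notin> Q" by blast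
    hence i: "i < n" "i \<notin> Q" by auto
    have z: "x $ i = 0" if x: "x \<in> U \<union> unit_vec n ` Q" for x
    proof (cases "x \<in> U")
      case True thus ?thesis using nb UB i by blast
    next
      case False
      then obtain q where "q \<in> Q" "x = unit_vec n q" using x by auto
      thus ?thesis using i Qn by auto
    qed
    have UQc: "U \<union> unit_vec n ` Q \<subseteq> carrier_vec n" using Uc by auto
    have "unit_vec n i \<in> V.span (U \<union> unit_vec n ` Q)" using spQ i by simp
    hence "unit_vec n i $ i = (0::real)" using V.span_coord_zero[OF UQc i(1) z] by blast
    thus False using i by simp
  qed
  then obtain b p where b: "b \<in> set (cols B)" and p: "p < n" "p \<notin> Q" "b $ p \<noteq> 0" by blast
  define ch where "ch = p # sorted_list_of_set Q"
  have chd: "distinct ch" unfolding ch_def using p(2) fQ by simp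
  have chs: "set ch \<subseteq> {0..<n}" unfolding ch_def using p(1) Qn fQ by auto
  have chL: "length ch = card Q + 1" unfolding ch_def using fQ by simp
  have ch0: "ch ! 0 = p" unfolding ch_def by simp
  have chQ: "\<exists>k. 1 \<le> k \<and> k < length ch \<and> q = ch ! k" if q: "q \<in> Q" for q
  proof -
    have "q \<in> set (sorted_list_of_set Q)" using q fQ by simp
    then obtain k where k: "k < length (sorted_list_of_set Q)" "sorted_list_of_set Q ! k = q"
      by (metis in_set_conv_nth)
    thus ?thesis unfolding ch_def by (intro exI[of _ "Suc k"]) auto
  qed
  define N where "N = chain_mat n ch"
  have Nc: "N \<in> carrier_mat n n" unfolding N_def by (rule chain_mat_carrier)
  have bc: "b \<in> carrier_vec n" using b cB by auto
  define y where "y s = (N ^\<^sub>m s) *\<^sub>v b" for s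
  have yc: "y s \<in> carrier_vec n" for s unfolding y_def using Nc bc by (metis mult_mat_vec_carrier pow_carrier_mat)
  define Y where "Y = {y s | s. 1 \<le> s \<and> s < length ch}"
  have Yc: "Y \<subseteq> carrier_vec n" unfolding Y_def using yc by auto
  have eY: "unit_vec n (ch!k) \<in> V.span Y" if k: "1 \<le> k" "k < length ch" for k
  proof (rule V.chain_span[OF Yc chd chs yc, where c = "b $ p"])
    show "\<And>s. 1 \<le> s \<Longrightarrow> s < length ch \<Longrightarrow> y s \<in> V.span Y"
      using V.own_span[OF Yc] unfolding Y_def by blast
    show "b $ p \<noteq> 0" by (rule p(3))
    show "\<And>s. 1 \<le> s \<Longrightarrow> s < length ch \<Longrightarrow> y s $ (ch!s) = b $ p"
      unfolding y_def N_def using chain_pow[OF chd chs bc] ch0 by simp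
    show "y s $ (ch!k') = 0" if "1 \<le> s" "s < length ch" "k' < s" for s k'
    proof -
      have "k' < length ch" using that by simp
      thus ?thesis unfolding y_def N_def using chain_pow[OF chd chs bc, of k' s] that by simp
    qed
    show "y s $ i = 0" if "1 \<le> s" "s < length ch" "i < n" "i \<notin> set ch" for s i
    proof -
      have "s = Suc (s - 1)" using that by simp
      hence "y s = (N ^\<^sub>m Suc (s - 1)) *\<^sub>v b" unfolding y_def by simp
      thus ?thesis unfolding N_def using chain_pow_out[OF chd chs bc that(3,4)] by simp
    qed
  qed (use k in auto)
  have QY: "(unit_vec n ` Q :: real vec set) \<subseteq> V.span Y"
  proof
    fix x :: "real vec" assume "x \<in> unit_vec n ` Q"
    then obtain q where q: "q \<in> Q" "x = unit_vec n q" by auto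
    obtain k where "1 \<le> k" "k < length ch" "q = ch ! k" using chQ[OF q(1)] by blast
    thus "x \<in> V.span Y" using eY q(2) by simp
  qed
  obtain Ul where Ul: "set Ul = U" "distinct Ul" using finite_distinct_list[OF fU] by blast
  have lUl: "length Ul = card U" using Ul distinct_card by metis
  define cs where "cs e = Ul @ map (\<lambda>s. ((e \<cdot>\<^sub>m A + N) ^\<^sub>m s) *\<^sub>v b) [1..<length ch]" for e
  have lcs: "length (cs e) = n" for e unfolding cs_def using lUl chL cQ by simp
  define Me where "Me e = mat_of_cols n (cs e)" for e
  have Mec: "Me e \<in> carrier_mat n n" for e unfolding Me_def using lcs by (metis mat_of_cols_carrier(1))
  have pc: "((e \<cdot>\<^sub>m A + N) ^\<^sub>m s) *\<^sub>v b \<in> carrier_vec n" for e s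
  proof -
    have "e \<cdot>\<^sub>m A + N \<in> carrier_mat n n" using A Nc by simp
    thus ?thesis using bc by (metis mult_mat_vec_carrier pow_carrier_mat)
  qed
  have csc: "set (cs e) \<subseteq> carrier_vec n" for e
    unfolding cs_def using Ul(1) Uc pc by auto
  have colsMe: "cols (Me e) = cs e" for e unfolding Me_def using csc by simp
  have z0: "0 \<cdot>\<^sub>m A + N = N" by (rule eq_matI) (use A Nc in auto)
  have cs0: "set (cs 0) = U \<union> Y"
  proof -
    have "set (map (\<lambda>s. ((0 \<cdot>\<^sub>m A + N) ^\<^sub>m s) *\<^sub>v b) [1..<length ch]) = Y"
      unfolding z0 Y_def y_def by auto
    thus ?thesis unfolding cs_def using Ul(1) by simp
  qed
  have UY: "U \<union> Y \<subseteq> carrier_vec n" using Uc Yc by auto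
  have "U \<union> unit_vec n ` Q \<subseteq> V.span (U \<union> Y)"
  proof -
    have "U \<subseteq> V.span (U \<union> Y)" using V.own_span[OF UY] by blast
    moreover have "V.span Y \<subseteq> V.span (U \<union> Y)" by (rule V.span_is_monotone) auto
    ultimately show ?thesis using QY by blast
  qed
  moreover have UQc: "U \<union> unit_vec n ` Q \<subseteq> carrier_vec n" using Uc by auto
  ultimately have "V.span (U \<union> unit_vec n ` Q) \<subseteq> V.span (U \<union> Y)"
    using V.span_mono_sub[OF UQc UY] by blast
  hence "V.span (set (cs 0)) = carrier_vec n" unfolding cs0 using spQ V.span_sub_carrier[OF UY] by auto
  hence det0: "det (Me 0) \<noteq> 0" using V.det_span_iff[OF Mec] colsMe by simp
  have "\<forall>s. \<exists>q. \<forall>e i. i < n \<longrightarrow> (((e \<cdot>\<^sub>m A + N) ^\<^sub>m s) *\<^sub>v b) $ i = poly (q i) e"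
    using poly_pow_vec[OF Nc A bc] by blast
  then obtain qf where qf: "\<And>s e i. i < n \<Longrightarrow> (((e \<cdot>\<^sub>m A + N) ^\<^sub>m s) *\<^sub>v b) $ i = poly (qf s i) e"
    by metis
  define P where "P i j = (if j < length Ul then [:Ul ! j $ i:] else qf (Suc (j - length Ul)) i)" for i j
  have Pe: "Me e $$ (i,j) = poly (P i j) e" if ij: "i < n" "j < n" for e i j
  proof -
    have "Me e $$ (i,j) = cs e ! j $ i" unfolding Me_def using ij lcs[of e] by (simp add: mat_of_cols_index)
    also have "\<dots> = poly (P i j) e"
    proof (cases "j < length Ul")
      case True thus ?thesis unfolding cs_def P_def by (simp add: nth_append)
    next
      case False
      hence "j - length Ul < length ch - 1" using ij lcs[of e] unfolding cs_def by simp
      hence eq1: "cs e ! j = ((e \<cdot>\<^sub>m A + N) ^\<^sub>m (Suc (j - length Ul))) *\<^sub>v b"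
        unfolding cs_def using False by (simp add: nth_append del: pow_mat.simps)
      have eq2: "P i j = qf (Suc (j - length Ul)) i" unfolding P_def using False by simp
      show ?thesis by (simp only: eq1 eq2 qf[OF ij(1)])
    qed
    finally show ?thesis .
  qed
  obtain D where D: "\<And>e. det (Me e) = poly D e" using det_poly[OF Mec Pe] by blast
  obtain e where e: "e \<noteq> 0" "det (Me e) \<noteq> 0" using poly_nonroot[of D] det0 D by metis
  have spe: "V.span (set (cs e)) = carrier_vec n" using V.det_span_iff[OF Mec] e(2) colsMe by simp
  define dA where "dA = (1/e) \<cdot>\<^sub>m N"
  define A2 where "A2 = A + dA"
  have dAc: "dA \<in> carrier_mat n n" unfolding dA_def using Nc by simp
  have A2c: "A2 \<in> carrier_mat n n" unfolding A2_def using A dAc by simp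
  define G2 where "G2 = {(A2 ^\<^sub>m k) *\<^sub>v c | k c. k < n \<and> c \<in> set (cols B)}"
  have G2c: "G2 \<subseteq> carrier_vec n"
  proof
    fix x assume "x \<in> G2"
    then obtain k c where "c \<in> set (cols B)" "x = (A2 ^\<^sub>m k) *\<^sub>v c" unfolding G2_def by blast
    thus "x \<in> carrier_vec n" using cB A2c by (metis mult_mat_vec_carrier pow_carrier_mat subsetD)
  qed
  have eA2: "e \<cdot>\<^sub>m A + N = e \<cdot>\<^sub>m A2"
    by (rule eq_matI) (use A Nc e(1) in \<open>auto simp: A2_def dA_def field_simps\<close>)
  have csG: "set (cs e) \<subseteq> V.span G2"
  proof
    fix x assume x: "x \<in> set (cs e)"
    show "x \<in> V.span G2"
    proof (cases "x \<in> U")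
      case True
      hence xB: "x \<in> set (cols B)" and xc: "x \<in> carrier_vec n" using UB Uc by auto
      have "x = (A2 ^\<^sub>m 0) *\<^sub>v x" using xc A2c by simp
      moreover have "(0::nat) < n" using Qlt by simp
      ultimately have "x \<in> G2" unfolding G2_def using xB by blast
      thus ?thesis using V.own_span[OF G2c] by auto
    next
      case False
      hence "x \<in> set (map (\<lambda>s. ((e \<cdot>\<^sub>m A + N) ^\<^sub>m s) *\<^sub>v b) [1..<length ch])"
        using x Ul(1) unfolding cs_def by auto
      then obtain s where s: "1 \<le> s" "s < length ch" "x = ((e \<cdot>\<^sub>m A + N) ^\<^sub>m s) *\<^sub>v b" by auto
      have xe: "x = (e ^ s) \<cdot>\<^sub>v ((A2 ^\<^sub>m s) *\<^sub>v b)" using s(3) smult_pow_vec[OF A2c bc] eA2 by simp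
      have "s < n" using s chL Qlt by simp
      hence "(A2 ^\<^sub>m s) *\<^sub>v b \<in> G2" unfolding G2_def using b by blast
      hence "(A2 ^\<^sub>m s) *\<^sub>v b \<in> V.span G2" using V.own_span[OF G2c] by auto
      thus ?thesis unfolding xe by (rule V.span_smult_vec[OF G2c])
    qed
  qed
  have "carrier_vec n \<subseteq> V.span G2" using V.span_mono_sub[OF csc G2c csG] spe by simp
  hence "rspan n G2 = carrier_vec n" using V.span_sub_carrier[OF G2c] sp by auto
  hence ctrl: "controllable A2 B" using controllable_iff2[OF A2c B] unfolding G2_def by simp
  have nz: "nnz dA = card Q" unfolding dA_def N_def using nnz_chain[OF chd chs, of "1/e"] e(1) chL by simp
  have "nnz dA \<le> n - mrank n B" using nz cQ rU by simp
  thus ?thesis using dAc ctrl unfolding A2_def by blast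
qed


lemma hcat_index:
  assumes X: "X \<in> carrier_mat n a" and Y: "Y \<in> carrier_mat n b" and i: "i < n" and j: "j < a + b"
  shows "hcat X Y $$ (i,j) = (if j < a then X $$ (i,j) else Y $$ (i, j - a))"
proof -
  have "hcat X Y $$ (i,j) = (cols X @ cols Y) ! j $ i"
    unfolding hcat_def using X Y i j by (simp add: mat_of_cols_index)
  also have "\<dots> = (if j < a then X $$ (i,j) else Y $$ (i, j - a))"
    using X Y i j by (auto simp: nth_append)
  finally show ?thesis .
qed

lemma hcat_carrier: "X \<in> carrier_mat n a \<Longrightarrow> Y \<in> carrier_mat n b \<Longrightarrow> hcat X Y \<in> carrier_mat n (a + b)"
  unfolding hcat_def carrier_mat_def by simp

lemma nnz_le:
  assumes "finite T" "{(i, j). i < dim_row M \<and> j < dim_col M \<and> M $$ (i, j) \<noteq> 0} \<subseteq> T"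
  shows "nnz M \<le> card T"
  unfolding nnz_def using assms by (rule card_mono)

definition NZ :: "real mat \<Rightarrow> (nat \<times> nat) set" where
  "NZ M = {(i, j). i < dim_row M \<and> j < dim_col M \<and> M $$ (i, j) \<noteq> 0}"

lemma NZ_finite: "finite (NZ M)"
proof -
  have "NZ M \<subseteq> {0..<dim_row M} \<times> {0..<dim_col M}" unfolding NZ_def by auto
  thus ?thesis using finite_subset by blast
qed

lemma nnz_NZ: "nnz M = card (NZ M)" unfolding nnz_def NZ_def ..

lemma nnz_hcat:
  assumes X: "X \<in> carrier_mat n a" and Y: "Y \<in> carrier_mat n b"
  shows "nnz (hcat X Y) \<le> nnz X + nnz Y"
proof -
  define sh where "sh = (\<lambda>(i::nat,j). (i, j + a))"
  have HC: "hcat X Y \<in> carrier_mat n (a + b)" by (rule hcat_carrier[OF X Y])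
  have "NZ (hcat X Y) \<subseteq> NZ X \<union> sh ` NZ Y"
  proof
    fix x assume "x \<in> NZ (hcat X Y)"
    then obtain i j where x: "x = (i,j)" "i < n" "j < a + b" "hcat X Y $$ (i,j) \<noteq> 0"
      unfolding NZ_def using HC by auto
    show "x \<in> NZ X \<union> sh ` NZ Y"
    proof (cases "j < a")
      case True
      hence "X $$ (i,j) \<noteq> 0" using x hcat_index[OF X Y x(2,3)] by simp
      thus ?thesis unfolding NZ_def using X x True by auto
    next
      case False
      hence "Y $$ (i,j - a) \<noteq> 0" using x hcat_index[OF X Y x(2,3)] by simp
      hence "(i, j - a) \<in> NZ Y" unfolding NZ_def using Y x False by auto
      moreover have "x = sh (i, j - a)" unfolding sh_def using x False by simp
      ultimately show ?thesis by blast
    qed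
  qed
  hence "card (NZ (hcat X Y)) \<le> card (NZ X \<union> sh ` NZ Y)"
    by (rule card_mono[rotated]) (simp add: NZ_finite)
  also have "\<dots> \<le> card (NZ X) + card (sh ` NZ Y)" by (rule card_Un_le)
  also have "card (sh ` NZ Y) \<le> card (NZ Y)" by (rule card_image_le[OF NZ_finite])
  finally show ?thesis unfolding nnz_NZ by simp
qed

lemma nnz_zero: "nnz (0\<^sub>m n m) = 0"
proof -
  have e: "{(i, j). i < n \<and> j < m \<and> (0\<^sub>m n m :: real mat) $$ (i, j) \<noteq> 0} = {}"
    by auto
  show ?thesis unfolding nnz_def by (simp add: e)
qed

lemma rspan_zero: "0\<^sub>v n \<in> rspan n X"
proof -
  interpret V: vec_space "TYPE(real)" n .
  have "0\<^sub>v n \<in> V.span X" by (intro V.in_spanI[of _ "\<lambda>_. 0" "{}"]) (auto simp: V.lincomb_def)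
  thus ?thesis unfolding rspan_def by simp
qed

lemma ctrl_n0:
  assumes A: "A \<in> carrier_mat 0 0" and B: "B \<in> carrier_mat 0 m"
  shows "controllable A B"
proof -
  let ?X = "{(A ^\<^sub>m k) *\<^sub>v c | k c. k < 0 \<and> c \<in> set (cols B)}"
  have c0: "carrier_vec 0 = {0\<^sub>v 0 :: real vec}" by (auto intro!: eq_vecI)
  have "rspan 0 ?X \<subseteq> carrier_vec 0" by (rule rspan_sub) auto
  moreover have "0\<^sub>v 0 \<in> rspan 0 ?X" by (rule rspan_zero)
  ultimately have "rspan 0 ?X = carrier_vec 0" unfolding c0 by blast
  thus ?thesis using controllable_iff2[OF A B] by simp
qed


theorem theorem4:
  fixes A B :: "real mat" and n m :: nat
  assumes "A \<in> carrier_mat n n" and "B \<in> carrier_mat n m" and "m \<ge> 1"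
    and "\<not> controllable A B"
  shows "(mrank n B \<ge> 1 \<longrightarrow> rc A B \<le> n - mrank n B)
       \<and> (mrank n B = 0 \<longrightarrow> rc A B \<le> n)
       \<and> rc A B \<ge> Min {card J | J. J \<subseteq> {0..<n} \<and> controllable A (hcat B (id_cols n J))}"
proof -
  note A = assms(1) and B = assms(2) and m1 = assms(3) and nc = assms(4)
  define S where "S = {nnz (hcat dA dB) | dA dB. dA \<in> carrier_mat n n \<and> dB \<in> carrier_mat n m \<and>
      controllable (A + dA) (B + dB)}"
  have rcS: "rc A B = Inf S" unfolding rc_def S_def using A B by simp
  have bdd: "bdd_below S" by (rule bdd_belowI[of _ 0]) simp
  have n1: "n \<ge> 1"
  proof (rule ccontr)
    assume "\<not> n \<ge> 1"
    hence "n = 0" by simp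
    thus False using ctrl_n0[of A B m] A B nc by simp
  qed
  have up1: "\<exists>x\<in>S. x \<le> n - mrank n B" if r: "mrank n B \<ge> 1"
  proof -
    obtain dA where dA: "dA \<in> carrier_mat n n" "nnz dA \<le> n - mrank n B" "controllable (A + dA) B"
      using part1_core[OF A B r] by blast
    have "B + 0\<^sub>m n m = B" using B by simp
    hence "nnz (hcat dA (0\<^sub>m n m)) \<in> S" unfolding S_def using dA by force
    moreover have "nnz (hcat dA (0\<^sub>m n m)) \<le> nnz dA"
      using nnz_hcat[OF dA(1), of "0\<^sub>m n m" m] nnz_zero by simp
    ultimately have "nnz (hcat dA (0\<^sub>m n m)) \<in> S \<and> nnz (hcat dA (0\<^sub>m n m)) \<le> n - mrank n B"
      using dA(2) by linarith
    thus ?thesis by blast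
  qed
  have up0: "\<exists>x\<in>S. x \<le> n" if r: "mrank n B = 0"
  proof -
    define E :: "real mat" where "E = mat n m (\<lambda>(i,j). if i = 0 \<and> j = 0 then 1 - B $$ (0,0) else 0)"
    have Ec: "E \<in> carrier_mat n m" unfolding E_def by simp
    define B' where "B' = B + E"
    have B'c: "B' \<in> carrier_mat n m" unfolding B'_def using B Ec by simp
    have B00: "B' $$ (0,0) = 1" unfolding B'_def E_def using B n1 m1 by simp
    have c0: "col B' 0 \<in> set (cols B')" using B'c m1 unfolding set_cols_eq by auto
    have cc: "col B' 0 \<in> carrier_vec n" using col_carrier_vec[of 0 m B' n] B'c m1 by simp
    have cnz: "col B' 0 \<noteq> 0\<^sub>v n"
    proof
      assume "col B' 0 = 0\<^sub>v n"
      hence "col B' 0 $ 0 = 0" using n1 by simp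
      thus False using B00 B'c n1 m1 by simp
    qed
    interpret V: vec_space "TYPE(real)" n .
    have li: "V.lin_indpt {col B' 0}"
      using V.lin_indpt_single[OF cc cnz] .
    have "V.rank B' \<ge> card {col B' 0}"
      using V.rank_ge_card_indpt[OF B'c _ li] c0 by blast
    hence rB': "mrank n B' \<ge> 1" unfolding mrank_def by simp
    obtain dA where dA: "dA \<in> carrier_mat n n" "nnz dA \<le> n - mrank n B'" "controllable (A + dA) B'"
      using part1_core[OF A B'c rB'] by blast
    have "nnz (hcat dA E) \<in> S" unfolding S_def using dA Ec unfolding B'_def by blast
    moreover have "nnz E \<le> 1"
    proof -
      have "NZ E \<subseteq> {(0,0)}" unfolding NZ_def E_def by (auto split: if_splits)
      hence "card (NZ E) \<le> card {(0::nat,0::nat)}" by (rule card_mono[rotated]) simp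
      thus ?thesis unfolding nnz_NZ by simp
    qed
    moreover have "nnz (hcat dA E) \<le> nnz dA + nnz E" by (rule nnz_hcat[OF dA(1) Ec])
    ultimately have "nnz (hcat dA E) \<in> S" "nnz (hcat dA E) \<le> n" using dA(2) rB' n1 by linarith+
    thus ?thesis by blast
  qed
  have Sne: "S \<noteq> {}"
  proof (cases "mrank n B \<ge> 1")
    case True thus ?thesis using up1 by blast
  next
    case False thus ?thesis using up0 by force
  qed
  have P1: "mrank n B \<ge> 1 \<longrightarrow> rc A B \<le> n - mrank n B"
    using up1 cInf_lower[OF _ bdd] rcS by fastforce
  have P2: "mrank n B = 0 \<longrightarrow> rc A B \<le> n"
    using up0 cInf_lower[OF _ bdd] rcS by fastforce
  have "Inf S \<in> S" using Inf_nat_def1[OF Sne] .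
  then obtain dA dB where dd: "Inf S = nnz (hcat dA dB)" "dA \<in> carrier_mat n n" "dB \<in> carrier_mat n m"
    "controllable (A + dA) (B + dB)" unfolding S_def by blast
  define H where "H = hcat dA dB"
  have Hc: "H \<in> carrier_mat n (n + m)" unfolding H_def by (rule hcat_carrier[OF dd(2,3)])
  define J where "J = fst ` NZ H"
  have Jn: "J \<subseteq> {0..<n}" unfolding J_def NZ_def using Hc by auto
  have cJ: "card J \<le> nnz H" unfolding J_def nnz_NZ by (rule card_image_le[OF NZ_finite])
  have zA: "dA $$ (i,j) = 0" if "i < n" "j < n" "i \<notin> J" for i j
  proof (rule ccontr)
    assume "dA $$ (i,j) \<noteq> 0"
    hence "H $$ (i,j) \<noteq> 0" unfolding H_def using hcat_index[OF dd(2,3), of i j] that by simp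
    hence "(i,j) \<in> NZ H" unfolding NZ_def using Hc that by simp
    hence "i \<in> J" unfolding J_def by force
    thus False using that by simp
  qed
  have zB: "dB $$ (i,j) = 0" if "i < n" "j < m" "i \<notin> J" for i j
  proof (rule ccontr)
    assume "dB $$ (i,j) \<noteq> 0"
    hence "H $$ (i,n + j) \<noteq> 0" unfolding H_def using hcat_index[OF dd(2,3), of i "n + j"] that by simp
    hence "(i,n + j) \<in> NZ H" unfolding NZ_def using Hc that by simp
    hence "i \<in> J" unfolding J_def by force
    thus False using that by simp
  qed
  have ctrlJ: "controllable A (hcat B (id_cols n J))"
    by (rule part2_core[OF A B dd(2,3) Jn zA zB dd(4)])
  define MS where "MS = {card J | J. J \<subseteq> {0..<n} \<and> controllable A (hcat B (id_cols n J))}"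
  have "finite MS"
  proof -
    have "MS \<subseteq> card ` Pow {0..<n}" unfolding MS_def by auto
    thus ?thesis using finite_subset by blast
  qed
  moreover have "card J \<in> MS" unfolding MS_def using Jn ctrlJ by blast
  ultimately have "Min MS \<le> card J" by (rule Min_le)
  hence P3: "rc A B \<ge> Min MS" using cJ dd(1) rcS unfolding H_def by simp
  show ?thesis using P1 P2 P3 unfolding MS_def by blast
qed


end
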